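(* Let $G$ be a topological group, let $G'$ be a separated topological group and let $f_n\colon G\to G'$, $n\in\mathbb{N}$, be a sequence of homomorphisms of topological groups. Then the following are equivalent: (a) the sequence $(f_n)_n$ converges continuously to a homomorphism $f\colon G\to G'$; (b) there exists a homomorphism of topological groups $f\colon G\to G'$ such that the sequence $(f_n-f)_n$ converges continuously to the zero homomorphism; (c) the sequence $(f_n)_n$ converges pointwise to a homomorphism of topological groups $f\colon G\to G'$, and for every open subgroup $H'$ of $G'$ there exist an open subgroup $H$ of $G$ and an integer $n_0\ge0$ such that $(f_n-f)(H)\subseteq H'$ for every $n\ge n_0$. In particular, if a sequence of homomorphisms of topological groups $(f_n)_n$ converges continuously to a homomorphism $f\colon G\to G'$, then $f$ is continuous.
   Context: Topological groups are abelian groups with a linear topology admitting a countable fundamental system of neighbourhoods of $0$ consisting of open subgroups; a homomorphism of topological groups is a continuous group homomorphism; separated means Hausdorff. For group homomorphisms $f_n,f\colon G\to G'$: $(f_n)$ converges pointwise to $f$ if for every $g\in G$ and open subgroup $H'$ of $G'$ there is $n_0$ with $f_n(g)-f(g)\in H'$ for $n\ge n_0$; $(f_n)$ converges continuously to $f$ if every $f_n$ is continuous and for every $g\in G$ and open subgroup $H'$ of $G'$ there exist an open subgroup $H$ of $G$ and $n_0$ such that $f_n(g+x)-f(g+x)\in H'$ for all $x\in H$ and all $n\ge n_0$. *)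

theory Defs
  imports "HOL-Analysis.Analysis"
begin

definition add_subgroup :: "'a::ab_group_add set \<Rightarrow> bool" where
  "add_subgroup H \<longleftrightarrow> 0 \<in> H \<and> (\<forall>x\<in>H. \<forall>y\<in>H. x - y \<in> H)"

definition open_subgroup :: "'a::ab_group_add topology \<Rightarrow> 'a set \<Rightarrow> bool" where
  "open_subgroup T H \<longleftrightarrow> add_subgroup H \<and> openin T H"

text \<open>A topological group in the sense of the paper: an abelian group (the whole type)
  with a linear topology, i.e. a translation invariant topology having a countable
  fundamental system of neighbourhoods of 0 consisting of open subgroups.\<close>
definition lin_top_group :: "'a::ab_group_add topology \<Rightarrow> bool" where
  "lin_top_group T \<longleftrightarrow> topspace T = UNIV \<and>
     (\<forall>U a. openin T U \<longrightarrow> openin T ((\<lambda>x. a + x) ` U)) \<and>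
     (\<exists>B :: nat \<Rightarrow> 'a set. (\<forall>n. open_subgroup T (B n)) \<and>
        (\<forall>U. openin T U \<and> 0 \<in> U \<longrightarrow> (\<exists>n. B n \<subseteq> U)))"

definition grp_hom :: "('a::ab_group_add \<Rightarrow> 'b::ab_group_add) \<Rightarrow> bool" where
  "grp_hom f \<longleftrightarrow> (\<forall>x y. f (x + y) = f x + f y)"

definition top_grp_hom :: "'a::ab_group_add topology \<Rightarrow> 'b::ab_group_add topology \<Rightarrow> ('a \<Rightarrow> 'b) \<Rightarrow> bool" where
  "top_grp_hom T T' f \<longleftrightarrow> grp_hom f \<and> continuous_map T T' f"

definition conv_pointwise :: "'b::ab_group_add topology \<Rightarrow> (nat \<Rightarrow> 'a \<Rightarrow> 'b) \<Rightarrow> ('a \<Rightarrow> 'b) \<Rightarrow> bool" where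
  "conv_pointwise T' fs f \<longleftrightarrow>
     (\<forall>g H'. open_subgroup T' H' \<longrightarrow> (\<exists>n0. \<forall>n\<ge>n0. fs n g - f g \<in> H'))"

definition conv_continuous :: "'a::ab_group_add topology \<Rightarrow> 'b::ab_group_add topology \<Rightarrow>
    (nat \<Rightarrow> 'a \<Rightarrow> 'b) \<Rightarrow> ('a \<Rightarrow> 'b) \<Rightarrow> bool" where
  "conv_continuous T T' fs f \<longleftrightarrow> (\<forall>n. continuous_map T T' (fs n)) \<and>
     (\<forall>g H'. open_subgroup T' H' \<longrightarrow>
        (\<exists>H n0. open_subgroup T H \<and> (\<forall>x\<in>H. \<forall>n\<ge>n0. fs n (g + x) - f (g + x) \<in> H')))"

end

theory Submission
  imports Defs
begin

lemma sg_add: "add_subgroup H \<Longrightarrow> x \<in> H \<Longrightarrow> y \<in> H \<Longrightarrow> x + y \<in> H"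
  unfolding add_subgroup_def by (metis diff_0 diff_minus_eq_add)

lemma sg_diff: "add_subgroup H \<Longrightarrow> x \<in> H \<Longrightarrow> y \<in> H \<Longrightarrow> x - y \<in> H"
  unfolding add_subgroup_def by blast

lemma sg_zero: "add_subgroup H \<Longrightarrow> 0 \<in> H"
  unfolding add_subgroup_def by blast

lemma osg_int: "open_subgroup T H1 \<Longrightarrow> open_subgroup T H2 \<Longrightarrow> open_subgroup T (H1 \<inter> H2)"
  unfolding open_subgroup_def add_subgroup_def by auto

lemma hom_0: "grp_hom h \<Longrightarrow> h 0 = 0"
  unfolding grp_hom_def by (metis add.right_neutral add_left_cancel)

lemma hom_diff: "grp_hom h \<Longrightarrow> h (a - b) = h a - h b"
  unfolding grp_hom_def by (metis add_diff_cancel diff_add_cancel)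

lemma hom_sub: "grp_hom f \<Longrightarrow> grp_hom g \<Longrightarrow> grp_hom (\<lambda>x. f x - g x)"
  unfolding grp_hom_def by (simp add: algebra_simps)

lemma cont_iff:
  fixes T :: "'a::ab_group_add topology" and T' :: "'b::ab_group_add topology"
  assumes T: "lin_top_group T" and T': "lin_top_group T'" and h: "grp_hom h"
  shows "continuous_map T T' h \<longleftrightarrow>
    (\<forall>H'. open_subgroup T' H' \<longrightarrow> (\<exists>H. open_subgroup T H \<and> h ` H \<subseteq> H'))"
proof -
  have tT: "topspace T = UNIV" and trT: "\<And>U a. openin T U \<Longrightarrow> openin T ((\<lambda>x. a + x) ` U)"
    using T unfolding lin_top_group_def by auto
  have "\<exists>B :: nat \<Rightarrow> 'a set. (\<forall>n. open_subgroup T (B n)) \<and>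
        (\<forall>U. openin T U \<and> 0 \<in> U \<longrightarrow> (\<exists>n. B n \<subseteq> U))"
    using T unfolding lin_top_group_def by (elim conjE)
  then obtain B :: "nat \<Rightarrow> 'a set" where B0: "\<forall>n. open_subgroup T (B n)"
    "\<forall>U. openin T U \<and> 0 \<in> U \<longrightarrow> (\<exists>n. B n \<subseteq> U)" by (elim exE conjE)
  have B: "\<And>n. open_subgroup T (B n)"
    "\<And>U. openin T U \<Longrightarrow> 0 \<in> U \<Longrightarrow> \<exists>n. B n \<subseteq> U"
    using B0 by simp_all
  have tT': "topspace T' = UNIV" and trT': "\<And>U a. openin T' U \<Longrightarrow> openin T' ((\<lambda>x. a + x) ` U)"
    using T' unfolding lin_top_group_def by auto
  have "\<exists>B' :: nat \<Rightarrow> 'b set. (\<forall>n. open_subgroup T' (B' n)) \<and>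
        (\<forall>U. openin T' U \<and> 0 \<in> U \<longrightarrow> (\<exists>n. B' n \<subseteq> U))"
    using T' unfolding lin_top_group_def by (elim conjE)
  then obtain B' :: "nat \<Rightarrow> 'b set" where B'0: "\<forall>n. open_subgroup T' (B' n)"
    "\<forall>U. openin T' U \<and> 0 \<in> U \<longrightarrow> (\<exists>n. B' n \<subseteq> U)" by (elim exE conjE)
  have B': "\<And>n. open_subgroup T' (B' n)"
    "\<And>U. openin T' U \<Longrightarrow> 0 \<in> U \<Longrightarrow> \<exists>n. B' n \<subseteq> U"
    using B'0 by simp_all
  show ?thesis
  proof
    assume c: "continuous_map T T' h"
    show "\<forall>H'. open_subgroup T' H' \<longrightarrow> (\<exists>H. open_subgroup T H \<and> h ` H \<subseteq> H')"
    proof (intro allI impI)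
      fix H' assume H': "open_subgroup T' H'"
      have "openin T {x \<in> topspace T. h x \<in> H'}"
        using c H' unfolding continuous_map open_subgroup_def by blast
      hence o: "openin T {x. h x \<in> H'}" using tT by simp
      have "0 \<in> {x. h x \<in> H'}" using hom_0[OF h] H' sg_zero unfolding open_subgroup_def by auto
      then obtain n where "B n \<subseteq> {x. h x \<in> H'}" using B(2)[OF o] by blast
      thus "\<exists>H. open_subgroup T H \<and> h ` H \<subseteq> H'" using B(1) by blast
    qed
  next
    assume R: "\<forall>H'. open_subgroup T' H' \<longrightarrow> (\<exists>H. open_subgroup T H \<and> h ` H \<subseteq> H')"
    have "\<forall>U. openin T' U \<longrightarrow> openin T {x \<in> UNIV. h x \<in> U}"
    proof (intro allI impI)
      fix U assume U: "openin T' U"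
      show "openin T {x \<in> UNIV. h x \<in> U}"
      proof (subst openin_subopen, intro ballI)
        fix x assume x: "x \<in> {x \<in> UNIV. h x \<in> U}"
        let ?V = "(\<lambda>y. - h x + y) ` U"
        have "openin T' ?V" using trT' U by blast
        moreover have "0 \<in> ?V" using x by (auto intro!: image_eqI[where x="h x"])
        ultimately obtain m where m: "B' m \<subseteq> ?V" using B'(2) by blast
        obtain H where H: "open_subgroup T H" "h ` H \<subseteq> B' m" using R B'(1) by blast
        let ?W = "(\<lambda>y. x + y) ` H"
        have "openin T ?W" using trT H(1) unfolding open_subgroup_def by blast
        moreover have "x \<in> ?W" using H(1) sg_zero unfolding open_subgroup_def
          by (auto intro!: image_eqI[where x=0])
        moreover have "?W \<subseteq> {x \<in> UNIV. h x \<in> U}"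
        proof
          fix z assume "z \<in> ?W"
          then obtain y where y: "y \<in> H" "z = x + y" by blast
          have "h y \<in> ?V" using y H(2) m by blast
          then obtain u where u: "u \<in> U" "h y = - h x + u" by blast
          have "h z = h x + h y" using y h unfolding grp_hom_def by simp
          also have "\<dots> = u" using u by simp
          finally show "z \<in> {x \<in> UNIV. h x \<in> U}" using u by simp
        qed
        ultimately show "\<exists>W. openin T W \<and> x \<in> W \<and> W \<subseteq> {x \<in> UNIV. h x \<in> U}" by blast
      qed
    qed
    thus "continuous_map T T' h" unfolding continuous_map tT tT' by simp
  qed
qed

lemma cont_sub:
  assumes T: "lin_top_group T" and T': "lin_top_group T'" and f: "top_grp_hom T T' f"
    and g: "top_grp_hom T T' g"
  shows "continuous_map T T' (\<lambda>x. f x - g x)"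
proof -
  have hf: "grp_hom f" and hg: "grp_hom g" and cf: "continuous_map T T' f"
    and cg: "continuous_map T T' g" using f g unfolding top_grp_hom_def by auto
  have cf': "\<forall>H'. open_subgroup T' H' \<longrightarrow> (\<exists>H. open_subgroup T H \<and> f ` H \<subseteq> H')"
    using cont_iff[OF T T' hf] cf by (rule iffD1)
  have cg': "\<forall>H'. open_subgroup T' H' \<longrightarrow> (\<exists>H. open_subgroup T H \<and> g ` H \<subseteq> H')"
    using cont_iff[OF T T' hg] cg by (rule iffD1)
  have "\<forall>H'. open_subgroup T' H' \<longrightarrow> (\<exists>H. open_subgroup T H \<and> (\<lambda>x. f x - g x) ` H \<subseteq> H')"
  proof (intro allI impI)
    fix H' assume H': "open_subgroup T' H'"
    obtain H1 where H1: "open_subgroup T H1" "f ` H1 \<subseteq> H'"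
      using cf' H' by meson
    obtain H2 where H2: "open_subgroup T H2" "g ` H2 \<subseteq> H'"
      using cg' H' by meson
    have sH': "add_subgroup H'" using H' unfolding open_subgroup_def by simp
    have "(\<lambda>x. f x - g x) ` (H1 \<inter> H2) \<subseteq> H'"
    proof
      fix y assume "y \<in> (\<lambda>x. f x - g x) ` (H1 \<inter> H2)"
      then obtain x where x: "x \<in> H1" "x \<in> H2" "y = f x - g x" by blast
      have "f x \<in> H'" "g x \<in> H'" using x H1(2) H2(2) by auto
      thus "y \<in> H'" using sg_diff[OF sH'] x(3) by simp
    qed
    thus "\<exists>H. open_subgroup T H \<and> (\<lambda>x. f x - g x) ` H \<subseteq> H'"
      using osg_int[OF H1(1) H2(1)] by meson
  qed
  thus ?thesis using cont_iff[OF T T' hom_sub[OF hf hg]] by (rule iffD2[rotated])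
qed

lemma part3:
  assumes T: "lin_top_group T" and T': "lin_top_group T'"
    and fs: "\<forall>n. top_grp_hom T T' (fs n)"
    and f: "grp_hom f" and cc: "conv_continuous T T' fs f"
  shows "continuous_map T T' f"
  unfolding cont_iff[OF T T' f]
proof (intro allI impI)
  fix H' assume H': "open_subgroup T' H'"
  obtain H n0 where H: "open_subgroup T H" "\<forall>x\<in>H. \<forall>n\<ge>n0. fs n (0 + x) - f (0 + x) \<in> H'"
    using cc H' unfolding conv_continuous_def by blast
  have "grp_hom (fs n0)" "continuous_map T T' (fs n0)" using fs unfolding top_grp_hom_def by auto
  then obtain H1 where H1: "open_subgroup T H1" "fs n0 ` H1 \<subseteq> H'"
    using H' cont_iff[OF T T'] by blast
  have "f ` (H \<inter> H1) \<subseteq> H'"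
  proof
    fix y assume "y \<in> f ` (H \<inter> H1)"
    then obtain x where x: "x \<in> H" "x \<in> H1" "y = f x" by blast
    have a: "fs n0 x - f x \<in> H'" using H(2) x by auto
    have b: "fs n0 x \<in> H'" using H1 x by blast
    have "fs n0 x - (fs n0 x - f x) \<in> H'" using sg_diff[OF _ b a] H' unfolding open_subgroup_def by blast
    thus "y \<in> H'" using x by simp
  qed
  thus "\<exists>H. open_subgroup T H \<and> f ` H \<subseteq> H'" using osg_int[OF H(1) H1(1)] by blast
qed

theorem lemma1p9:
  fixes T :: "'a::ab_group_add topology" and T' :: "'b::ab_group_add topology"
    and fs :: "nat \<Rightarrow> 'a \<Rightarrow> 'b"
  assumes "lin_top_group T" and "lin_top_group T'" and "Hausdorff_space T'"
    and "\<forall>n. top_grp_hom T T' (fs n)"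
  shows "((\<exists>f. grp_hom f \<and> conv_continuous T T' fs f)
          \<longleftrightarrow> (\<exists>f. top_grp_hom T T' f \<and>
                 conv_continuous T T' (\<lambda>n x. fs n x - f x) (\<lambda>x. 0)))
       \<and> ((\<exists>f. top_grp_hom T T' f \<and>
                 conv_continuous T T' (\<lambda>n x. fs n x - f x) (\<lambda>x. 0))
          \<longleftrightarrow> (\<exists>f. top_grp_hom T T' f \<and> conv_pointwise T' fs f \<and>
                 (\<forall>H'. open_subgroup T' H' \<longrightarrow>
                    (\<exists>H n0. open_subgroup T H \<and>
                       (\<forall>n\<ge>n0. (\<lambda>x. fs n x - f x) ` H \<subseteq> H')))))
       \<and> (\<forall>f. grp_hom f \<and> conv_continuous T T' fs f \<longrightarrow> continuous_map T T' f)"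
proof (intro conjI)
  note T = assms(1) and T' = assms(2) and fs = assms(4)
  show P3: "\<forall>f. grp_hom f \<and> conv_continuous T T' fs f \<longrightarrow> continuous_map T T' f"
    using part3[OF T T' fs] by blast
  show "(\<exists>f. grp_hom f \<and> conv_continuous T T' fs f)
          \<longleftrightarrow> (\<exists>f. top_grp_hom T T' f \<and>
                 conv_continuous T T' (\<lambda>n x. fs n x - f x) (\<lambda>x. 0))"
  proof
    assume "\<exists>f. grp_hom f \<and> conv_continuous T T' fs f"
    then obtain f where f: "grp_hom f" "conv_continuous T T' fs f" by blast
    have tf: "top_grp_hom T T' f" using P3 f unfolding top_grp_hom_def by blast
    have "conv_continuous T T' (\<lambda>n x. fs n x - f x) (\<lambda>x. 0)"
      using f(2) cont_sub[OF T T' fs[rule_format] tf] unfolding conv_continuous_def by simp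
    thus "\<exists>f. top_grp_hom T T' f \<and> conv_continuous T T' (\<lambda>n x. fs n x - f x) (\<lambda>x. 0)"
      using tf by blast
  next
    assume "\<exists>f. top_grp_hom T T' f \<and> conv_continuous T T' (\<lambda>n x. fs n x - f x) (\<lambda>x. 0)"
    then obtain f where f: "top_grp_hom T T' f" "conv_continuous T T' (\<lambda>n x. fs n x - f x) (\<lambda>x. 0)"
      by blast
    have "conv_continuous T T' fs f"
      using f(2) fs unfolding conv_continuous_def top_grp_hom_def by simp
    thus "\<exists>f. grp_hom f \<and> conv_continuous T T' fs f" using f(1) unfolding top_grp_hom_def by blast
  qed
  show "(\<exists>f. top_grp_hom T T' f \<and>
                 conv_continuous T T' (\<lambda>n x. fs n x - f x) (\<lambda>x. 0))
          \<longleftrightarrow> (\<exists>f. top_grp_hom T T' f \<and> conv_pointwise T' fs f \<and>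
                 (\<forall>H'. open_subgroup T' H' \<longrightarrow>
                    (\<exists>H n0. open_subgroup T H \<and>
                       (\<forall>n\<ge>n0. (\<lambda>x. fs n x - f x) ` H \<subseteq> H'))))"
  proof
    assume "\<exists>f. top_grp_hom T T' f \<and> conv_continuous T T' (\<lambda>n x. fs n x - f x) (\<lambda>x. 0)"
    then obtain f where f: "top_grp_hom T T' f" "conv_continuous T T' (\<lambda>n x. fs n x - f x) (\<lambda>x. 0)"
      by blast
    have pw: "conv_pointwise T' fs f"
      unfolding conv_pointwise_def
    proof (intro allI impI)
      fix g H' assume H': "open_subgroup T' H'"
      then obtain H n0 where H: "open_subgroup T H" "\<forall>x\<in>H. \<forall>n\<ge>n0. fs n (g + x) - f (g + x) - 0 \<in> H'"
        using f(2) unfolding conv_continuous_def by blast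
      have "0 \<in> H" using H(1) sg_zero unfolding open_subgroup_def by blast
      thus "\<exists>n0. \<forall>n\<ge>n0. fs n g - f g \<in> H'" using H(2) by force
    qed
    have "\<forall>H'. open_subgroup T' H' \<longrightarrow>
                    (\<exists>H n0. open_subgroup T H \<and>
                       (\<forall>n\<ge>n0. (\<lambda>x. fs n x - f x) ` H \<subseteq> H'))"
    proof (intro allI impI)
      fix H' assume H': "open_subgroup T' H'"
      then obtain H n0 where H: "open_subgroup T H" "\<forall>x\<in>H. \<forall>n\<ge>n0. fs n (0 + x) - f (0 + x) - 0 \<in> H'"
        using f(2) unfolding conv_continuous_def by blast
      thus "\<exists>H n0. open_subgroup T H \<and> (\<forall>n\<ge>n0. (\<lambda>x. fs n x - f x) ` H \<subseteq> H')" by auto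
    qed
    thus "\<exists>f. top_grp_hom T T' f \<and> conv_pointwise T' fs f \<and>
                 (\<forall>H'. open_subgroup T' H' \<longrightarrow>
                    (\<exists>H n0. open_subgroup T H \<and>
                       (\<forall>n\<ge>n0. (\<lambda>x. fs n x - f x) ` H \<subseteq> H')))" using f(1) pw by blast
  next
    assume "\<exists>f. top_grp_hom T T' f \<and> conv_pointwise T' fs f \<and>
                 (\<forall>H'. open_subgroup T' H' \<longrightarrow>
                    (\<exists>H n0. open_subgroup T H \<and>
                       (\<forall>n\<ge>n0. (\<lambda>x. fs n x - f x) ` H \<subseteq> H')))"
    then obtain f where f: "top_grp_hom T T' f" "conv_pointwise T' fs f"
      "\<forall>H'. open_subgroup T' H' \<longrightarrow>
                    (\<exists>H n0. open_subgroup T H \<and>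
                       (\<forall>n\<ge>n0. (\<lambda>x. fs n x - f x) ` H \<subseteq> H'))" by blast
    have hf: "grp_hom f" using f(1) unfolding top_grp_hom_def by blast
    have "conv_continuous T T' (\<lambda>n x. fs n x - f x) (\<lambda>x. 0)"
      unfolding conv_continuous_def
    proof (intro conjI allI impI)
      fix n show "continuous_map T T' (\<lambda>x. fs n x - f x)"
        using cont_sub[OF T T' fs[rule_format] f(1)] .
    next
      fix g H' assume H': "open_subgroup T' H'"
      obtain n1 where n1: "\<forall>n\<ge>n1. fs n g - f g \<in> H'" using f(2) H' unfolding conv_pointwise_def by blast
      obtain H n2 where H: "open_subgroup T H" "\<forall>n\<ge>n2. (\<lambda>x. fs n x - f x) ` H \<subseteq> H'"
        using f(3) H' by blast
      have "\<forall>x\<in>H. \<forall>n\<ge>max n1 n2. fs n (g + x) - f (g + x) - 0 \<in> H'"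
      proof (intro ballI allI impI)
        fix x n assume x: "x \<in> H" and n: "max n1 n2 \<le> n"
        have a: "fs n g - f g \<in> H'" using n1 n by simp
        have b: "fs n x - f x \<in> H'" using H(2) n x by auto
        have hn: "grp_hom (fs n)" using fs unfolding top_grp_hom_def by blast
        have "fs n (g + x) - f (g + x) = (fs n g - f g) + (fs n x - f x)"
          using hn hf unfolding grp_hom_def by (simp add: algebra_simps)
        thus "fs n (g + x) - f (g + x) - 0 \<in> H'"
          using sg_add[OF _ a b] H' unfolding open_subgroup_def by simp
      qed
      thus "\<exists>H n0. open_subgroup T H \<and> (\<forall>x\<in>H. \<forall>n\<ge>n0. fs n (g + x) - f (g + x) - 0 \<in> H')"
        using H(1) by blast
    qed
    thus "\<exists>f. top_grp_hom T T' f \<and> conv_continuous T T' (\<lambda>n x. fs n x - f x) (\<lambda>x. 0)"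
      using f(1) by blast
  qed
qed

end
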